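(* Let $N\ge 2$ be an integer. For nonnegative reals $h_1,\dots,h_N,g_1,\dots,g_N$ define (logarithms base $2$, $[x]^+=\max\{x,0\}$, $\Omega^c=\{1,\dots,N\}\setminus\Omega$) $$\overline C:=\min_{\Omega\subseteq\{1,\dots,N\}}\Big\{\log\Big(1+\big(\textstyle\sum_{i\in\Omega}g_i\big)^2\Big)+\log\Big(1+\sum_{j\in\Omega^c}h_j^2\Big)\Big\},$$ and for $\Delta>0$ $$R_{\mathrm{QMF}}(\Delta):=\min_{\Omega\subseteq\{1,\dots,N\}}\Big[\log\Big(1+\sum_{i\in\Omega}g_i^2\Big)+\log\Big(1+\sum_{j\in\Omega^c}\frac{h_j^2}{1+\Delta}\Big)-|\Omega|\log\frac{1+\Delta}{\Delta}\Big]^+.$$ Let $$\mathrm{gap}^*(\Delta;N):=\max\Big\{\log N+N\log\frac{1+\Delta}{\Delta},\ \log(N-1)+(N-1)\log\frac{1+\Delta}{\Delta}+\log(1+\Delta)\Big\}.$$ Then: (i) for every $\Delta>0$ and all nonnegative $h_i,g_i$, $\overline C-R_{\mathrm{QMF}}(\Delta)\le\mathrm{gap}^*(\Delta;N)$; (ii) $\min_{\Delta>0}\mathrm{gap}^*(\Delta;N)$ is attained at $\Delta_{\mathrm{opt}}=\frac{N}{N-1}$ if $N=2$ and at $\Delta_{\mathrm{opt}}=N-1$ if $N>2$, and the minimum value is $$\mathrm{gap}^*(N)=\begin{cases}2\log 3-1,& N=2,\\ N\log\frac{N}{N-1}+2\log(N-1),& N>2;\end{cases}$$ in particular, with the channel-independent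 choice $\Delta=\Delta_{\mathrm{opt}}$ at all relays, $\overline C-R_{\mathrm{QMF}}(\Delta_{\mathrm{opt}})\le\mathrm{gap}^*(N)=\Theta(\log N)$.
   Context: The setting is the full-duplex Gaussian $N$-relay diamond network: a source transmits $X$ with $\mathbb E|X|^2\le1$; relay $i$ receives $Y_i=\mathsf h_iX+Z_i$ and transmits $X_i$ with $\mathbb E|X_i|^2\le 1$; the destination receives $Y=\sum_i\mathsf g_iX_i+Z$, with i.i.d. $\mathcal{CN}(0,1)$ noises, and $h_i=|\mathsf h_i|$, $g_i=|\mathsf g_i|$. $\overline C$ is the cutset upper bound on capacity, and $R_{\mathrm{QMF}}(\Delta)$ is the quantize-map-and-forward achievable rate when every relay uses a Gaussian vector quantizer $\hat Y_i=Y_i+\hat Z_i$, $\hat Z_i\sim\mathcal{CN}(0,\Delta)$. *)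

theory Defs
  imports Complex_Main "HOL-Library.Landau_Symbols"
begin

definition pos_part :: "real \<Rightarrow> real" where
  "pos_part x = max x 0"

definition Cbar :: "nat \<Rightarrow> (nat \<Rightarrow> real) \<Rightarrow> (nat \<Rightarrow> real) \<Rightarrow> real" where
  "Cbar N h g = Min ((\<lambda>\<Omega>. log 2 (1 + (\<Sum>i\<in>\<Omega>. g i)^2)
        + log 2 (1 + (\<Sum>j\<in>{1..N} - \<Omega>. (h j)^2))) ` Pow {1..N})"

definition RQMF :: "nat \<Rightarrow> (nat \<Rightarrow> real) \<Rightarrow> (nat \<Rightarrow> real) \<Rightarrow> real \<Rightarrow> real" where
  "RQMF N h g \<Delta> = Min ((\<lambda>\<Omega>. pos_part (log 2 (1 + (\<Sum>i\<in>\<Omega>. (g i)^2))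
        + log 2 (1 + (\<Sum>j\<in>{1..N} - \<Omega>. (h j)^2 / (1 + \<Delta>)))
        - real (card \<Omega>) * log 2 ((1 + \<Delta>) / \<Delta>))) ` Pow {1..N})"

definition gapstar :: "real \<Rightarrow> nat \<Rightarrow> real" where
  "gapstar \<Delta> N = max (log 2 (real N) + real N * log 2 ((1 + \<Delta>) / \<Delta>))
      (log 2 (real N - 1) + (real N - 1) * log 2 ((1 + \<Delta>) / \<Delta>) + log 2 (1 + \<Delta>))"

definition Delta_opt :: "nat \<Rightarrow> real" where
  "Delta_opt N = (if N = 2 then real N / (real N - 1) else real N - 1)"

definition gapstar_opt :: "nat \<Rightarrow> real" where
  "gapstar_opt N = (if N = 2 then 2 * log 2 3 - 1
      else real N * log 2 (real N / (real N - 1)) + 2 * log 2 (real N - 1))"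

end

theory Submission
  imports Defs "HOL-Analysis.Convex" "HOL-Real_Asymp.Real_Asymp"
begin

lemma key:
  fixes N k :: nat and S1 S2 H \<Delta> :: real
  assumes N: "N \<ge> 2" and kN: "k \<le> N" and D: "\<Delta> > 0" and S2: "S2 \<ge> 0" and S1: "S1 \<ge> 0"
    and CS: "S1 \<le> real k * S2" and H: "H \<ge> 0" and kH: "k = N \<Longrightarrow> H = 0"
  shows "log 2 (1 + S1) + log 2 (1 + H)
     - (log 2 (1 + S2) + log 2 (1 + H / (1 + \<Delta>)) - real k * log 2 ((1 + \<Delta>) / \<Delta>))
     \<le> gapstar \<Delta> N"
proof -
  define a where "a = log 2 ((1 + \<Delta>) / \<Delta>)"
  have apos: "a > 0" unfolding a_def using D by simp
  have g1: "log 2 (1 + real N) \<ge> 0" by simp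
  have hb: "log 2 (1 + H) \<le> log 2 (1 + \<Delta>) + log 2 (1 + H / (1 + \<Delta>))"
  proof -
    have "(1 + \<Delta>) * (1 + H / (1 + \<Delta>)) = 1 + \<Delta> + H" using D by (simp add: field_simps)
    hence "log 2 (1 + H) \<le> log 2 ((1 + \<Delta>) * (1 + H / (1 + \<Delta>)))" using D H by simp
    also have "\<dots> = log 2 (1 + \<Delta>) + log 2 (1 + H / (1 + \<Delta>))"
    proof -
      have p: "1 + H / (1 + \<Delta>) > 0" using D H by (simp add: add_pos_nonneg)
      show ?thesis using p D by (simp add: log_mult)
    qed
    finally show ?thesis .
  qed
  have hb0: "log 2 (1 + \<Delta>) \<ge> 0" using D by simp
  have gb: "k \<ge> 1 \<Longrightarrow> log 2 (1 + S1) \<le> log 2 (real k) + log 2 (1 + S2)"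
  proof -
    assume k: "k \<ge> 1"
    have "1 + S1 \<le> real k * (1 + S2)" using CS k by (simp add: algebra_simps)
    hence "log 2 (1 + S1) \<le> log 2 (real k * (1 + S2))" using S1 by simp
    also have "\<dots> = log 2 (real k) + log 2 (1 + S2)" using k S2 by (simp add: log_mult)
    finally show ?thesis .
  qed
  have gap1: "log 2 (real N) + real N * a \<le> gapstar \<Delta> N" unfolding gapstar_def a_def by simp
  have gap2: "log 2 (real N - 1) + (real N - 1) * a + log 2 (1 + \<Delta>) \<le> gapstar \<Delta> N"
    unfolding gapstar_def a_def by simp
  have l1: "log 2 (real N - 1) \<ge> 0" using N by simp
  consider "k = 0" | "k = N" | "1 \<le> k \<and> k \<le> N - 1" using kN by linarith
  then show ?thesis
  proof cases
    case 1
    then have "S1 = 0" using CS S1 by simp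
    have s2: "log 2 (1 + S2) \<ge> 0" using S2 by simp
    have na: "(real N - 1) * a \<ge> 0" using N apos by simp
    show ?thesis using 1 \<open>S1 = 0\<close> hb gap2 l1 na s2 hb0
      by (simp add: a_def[symmetric])
  next
    case 2
    then show ?thesis using kH gb N gap1 by (simp add: a_def[symmetric])
  next
    case 3
    have k1: "k + 1 \<le> N" using 3 N by linarith
    hence rk: "real k \<le> real N - 1" by linarith
    have "log 2 (real k) \<le> log 2 (real N - 1)" using 3 rk by simp
    moreover have "real k * a \<le> (real N - 1) * a" using rk apos
      by (intro mult_right_mono) auto
    ultimately show ?thesis using 3 gb hb gap2 by (simp add: a_def[symmetric])
  qed
qed

lemma part1:
  fixes N :: nat and \<Delta> :: real and h g :: "nat \<Rightarrow> real"
  assumes N: "N \<ge> 2" and D: "\<Delta> > 0" and hg: "\<forall>i\<in>{1..N}. h i \<ge> 0 \<and> g i \<ge> 0"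
  shows "Cbar N h g - RQMF N h g \<Delta> \<le> gapstar \<Delta> N"
proof -
  define F where "F = (\<lambda>\<Omega>. pos_part (log 2 (1 + (\<Sum>i\<in>\<Omega>. (g i)^2))
        + log 2 (1 + (\<Sum>j\<in>{1..N} - \<Omega>. (h j)^2 / (1 + \<Delta>)))
        - real (card \<Omega>) * log 2 ((1 + \<Delta>) / \<Delta>)))"
  define B where "B = (\<lambda>\<Omega>. log 2 (1 + (\<Sum>i\<in>\<Omega>. g i)^2)
        + log 2 (1 + (\<Sum>j\<in>{1..N} - \<Omega>. (h j)^2)))"
  have fin: "finite (F ` Pow {1..N})" by simp
  have ne: "F ` Pow {1..N} \<noteq> {}" by blast
  have "RQMF N h g \<Delta> \<in> F ` Pow {1..N}" unfolding RQMF_def F_def[symmetric]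
    using Min_in[OF fin ne] .
  then obtain \<Omega> where O: "\<Omega> \<subseteq> {1..N}" and R: "RQMF N h g \<Delta> = F \<Omega>" by auto
  have C: "Cbar N h g \<le> B \<Omega>" unfolding Cbar_def B_def[symmetric]
    using O by (intro Min_le) auto
  have finO: "finite \<Omega>" using O finite_subset by blast
  have kN: "card \<Omega> \<le> N" using card_mono[OF _ O] by simp
  have S2: "(\<Sum>i\<in>\<Omega>. (g i)^2) \<ge> 0" by (simp add: sum_nonneg)
  have S1: "(\<Sum>i\<in>\<Omega>. g i)^2 \<ge> 0" by simp
  have CS: "(\<Sum>i\<in>\<Omega>. g i)^2 \<le> real (card \<Omega>) * (\<Sum>i\<in>\<Omega>. (g i)^2)"
    using Cauchy_Schwarz_ineq_sum[of g "\<lambda>_. 1" \<Omega>] by (simp add: mult.commute)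
  have H: "(\<Sum>j\<in>{1..N} - \<Omega>. (h j)^2) \<ge> 0" by (simp add: sum_nonneg)
  have kH: "card \<Omega> = N \<Longrightarrow> (\<Sum>j\<in>{1..N} - \<Omega>. (h j)^2) = 0"
  proof -
    assume "card \<Omega> = N"
    hence "\<Omega> = {1..N}" using card_subset_eq[OF _ O] by simp
    thus ?thesis by simp
  qed
  have Hd: "(\<Sum>j\<in>{1..N} - \<Omega>. (h j)^2 / (1 + \<Delta>)) = (\<Sum>j\<in>{1..N} - \<Omega>. (h j)^2) / (1 + \<Delta>)"
    by (simp add: sum_divide_distrib)
  have "F \<Omega> \<ge> log 2 (1 + (\<Sum>i\<in>\<Omega>. (g i)^2))
        + log 2 (1 + (\<Sum>j\<in>{1..N} - \<Omega>. (h j)^2) / (1 + \<Delta>))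
        - real (card \<Omega>) * log 2 ((1 + \<Delta>) / \<Delta>)"
    unfolding F_def pos_part_def Hd by simp
  moreover have "B \<Omega> - (log 2 (1 + (\<Sum>i\<in>\<Omega>. (g i)^2))
        + log 2 (1 + (\<Sum>j\<in>{1..N} - \<Omega>. (h j)^2) / (1 + \<Delta>))
        - real (card \<Omega>) * log 2 ((1 + \<Delta>) / \<Delta>)) \<le> gapstar \<Delta> N"
    unfolding B_def by (rule key[OF N kN D S2 S1 CS H kH])
  ultimately show ?thesis using C R by linarith
qed


lemma f2min:
  fixes N :: nat and \<Delta> :: real
  assumes N: "N \<ge> 2" and D: "\<Delta> > 0"
  shows "log 2 (real N - 1) + (real N - 1) * log 2 ((1 + (real N - 1)) / (real N - 1)) + log 2 (1 + (real N - 1))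
    \<le> log 2 (real N - 1) + (real N - 1) * log 2 ((1 + \<Delta>) / \<Delta>) + log 2 (1 + \<Delta>)"
proof -
  define m where "m = real N - 1"
  have m: "m \<ge> 1" using N unfolding m_def by simp
  have Nm: "real N = m + 1" unfolding m_def by simp
  have "(m / (m+1)) * log 2 (\<Delta> / m) + (1 / (m+1)) * log 2 1
     \<le> log 2 ((m / (m+1)) *\<^sub>R (\<Delta> / m) + (1 / (m+1)) *\<^sub>R 1)"
  proof -
    have cc: "\<forall>x\<in>{0<..}. \<forall>y\<in>{0<..}. \<forall>u\<ge>0. \<forall>v\<ge>0. u + v = 1 \<longrightarrow>
        u * log 2 x + v * log 2 y \<le> log 2 (u *\<^sub>R x + v *\<^sub>R y)"
      using log_concave[of 2] unfolding concave_on_iff by simp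
    have uv: "m / (m+1) + 1 / (m+1) = 1" using m by (simp add: field_simps)
    have x: "\<Delta> / m \<in> {0<..}" using m D by simp
    have y: "(1::real) \<in> {0<..}" by simp
    have u: "m / (m+1) \<ge> 0" "1 / (m+1) \<ge> 0" using m by auto
    show ?thesis using cc[rule_format, OF x y u uv] .
  qed
  also have "(m / (m+1)) *\<^sub>R (\<Delta> / m) + (1 / (m+1)) *\<^sub>R 1 = (1 + \<Delta>) / (m + 1)"
    using m by (simp add: field_simps)
  finally have c: "(m / (m+1)) * log 2 (\<Delta> / m) \<le> log 2 ((1 + \<Delta>) / (m + 1))" by simp
  have c2: "m * log 2 (\<Delta> / m) \<le> (m+1) * log 2 ((1 + \<Delta>) / (m + 1))"
  proof -
    have "m * log 2 (\<Delta> / m) = (m+1) * ((m / (m+1)) * log 2 (\<Delta> / m))" using m by simp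
    also have "\<dots> \<le> (m+1) * log 2 ((1 + \<Delta>) / (m + 1))"
      using c m by (intro mult_left_mono) auto
    finally show ?thesis .
  qed
  have e1: "log 2 (\<Delta> / m) = log 2 \<Delta> - log 2 m" using D m by (simp add: log_divide)
  have e2: "log 2 ((1 + \<Delta>) / (m + 1)) = log 2 (1 + \<Delta>) - log 2 (m+1)" using D m by (simp add: log_divide)
  have e3: "log 2 ((1 + \<Delta>) / \<Delta>) = log 2 (1 + \<Delta>) - log 2 \<Delta>" using D by (simp add: log_divide)
  have e4: "log 2 ((1 + m) / m) = log 2 (1 + m) - log 2 m" using m by (simp add: log_divide)
  have c3: "m * (log 2 \<Delta> - log 2 m) \<le> (1 + m) * (log 2 (1 + \<Delta>) - log 2 (1 + m))"
    using c2 unfolding e1 e2 by (simp add: add.commute)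
  have c4: "m * log 2 \<Delta> - m * log 2 m \<le> m * log 2 (1 + \<Delta>) + log 2 (1 + \<Delta>) - m * log 2 (1 + m) - log 2 (1 + m)"
    using c3 by (simp add: algebra_simps)
  show ?thesis unfolding m_def[symmetric] e3 e4 right_diff_distrib using c4 by linarith
qed

lemma gap_opt_eq:
  fixes N :: nat
  assumes N: "N \<ge> 2"
  shows "gapstar (Delta_opt N) N = gapstar_opt N"
proof (cases "N = 2")
  case True
  have a: "log 2 (3/2) = log 2 3 - 1" by (simp add: log_divide)
  show ?thesis using True unfolding gapstar_def Delta_opt_def gapstar_opt_def
    by (simp add: a)
next
  case False
  hence N3: "N \<ge> 3" using N by simp
  define m where "m = real N - 1"
  have m: "m \<ge> 2" using N3 unfolding m_def by simp
  have Nm: "real N = m + 1" unfolding m_def by simp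
  have e: "log 2 ((1 + m) / m) = log 2 (1 + m) - log 2 m" using m by (simp add: log_divide)
  have le: "log 2 (m+1) \<le> 2 * log 2 m"
  proof -
    have "2 * m \<le> m * m" using m by (intro mult_right_mono) auto
    hence "m + 1 \<le> m^2" unfolding power2_eq_square using m by linarith
    hence "log 2 (m+1) \<le> log 2 (m^2)" using m by simp
    also have "\<dots> = 2 * log 2 m" using m by (simp add: log_nat_power)
    finally show ?thesis .
  qed
  show ?thesis using False unfolding gapstar_def Delta_opt_def gapstar_opt_def m_def[symmetric] Nm
    using e le by (simp add: algebra_simps max_def)
qed

lemma gap_min:
  fixes N :: nat and \<Delta> :: real
  assumes N: "N \<ge> 2" and D: "\<Delta> > 0"
  shows "gapstar (Delta_opt N) N \<le> gapstar \<Delta> N"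
proof (cases "N = 2")
  case True
  have v: "gapstar (Delta_opt N) N = 2 * log 2 3 - 1" using gap_opt_eq[OF N] True
    by (simp add: gapstar_opt_def)
  show ?thesis
  proof (cases "\<Delta> \<le> 2")
    case True
    have "3/2 \<le> (1 + \<Delta>) / \<Delta>" using D True by (simp add: field_simps)
    hence "log 2 (3/2) \<le> log 2 ((1 + \<Delta>) / \<Delta>)" using D by simp
    moreover have "log 2 (3/2) = log 2 3 - 1" by (simp add: log_divide)
    ultimately show ?thesis using v \<open>N = 2\<close> unfolding gapstar_def by simp
  next
    case False
    have q: "2*(1+\<Delta>)^2 - 9*\<Delta> = (2*\<Delta>-1)*(\<Delta>-2)" by (simp add: algebra_simps power2_eq_square)
    have "(2*\<Delta>-1)*(\<Delta>-2) \<ge> 0" using False by (intro mult_nonneg_nonneg) auto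
    hence "9/2 * \<Delta> \<le> (1 + \<Delta>)^2" using q by linarith
    hence "9/2 \<le> (1 + \<Delta>)^2 / \<Delta>" using D by (simp add: pos_le_divide_eq)
    hence "log 2 (9/2) \<le> log 2 ((1 + \<Delta>)^2 / \<Delta>)" using D by simp
    moreover have "log 2 (9/2) = 2 * log 2 3 - 1"
    proof -
      have "log 2 (9/2) = log 2 (3^2) - 1" by (simp add: log_divide)
      moreover have "log 2 ((3::real)^2) = 2 * log 2 3" using log_nat_power[of 3 2 2] by simp
      ultimately show ?thesis by simp
    qed
    moreover have "log 2 ((1 + \<Delta>)^2 / \<Delta>) = log 2 ((1 + \<Delta>) / \<Delta>) + log 2 (1 + \<Delta>)"
      using D by (simp add: log_divide log_nat_power)
    ultimately show ?thesis using v \<open>N = 2\<close> unfolding gapstar_def by simp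
  qed
next
  case False
  have "gapstar (Delta_opt N) N = log 2 (real N - 1) + (real N - 1) * log 2 ((1 + (real N - 1)) / (real N - 1)) + log 2 (1 + (real N - 1))"
  proof -
    define m where "m = real N - 1"
    have m: "m \<ge> 2" using N False unfolding m_def by simp
    have Nm: "real N = m + 1" unfolding m_def by simp
    have e: "log 2 ((1 + m) / m) = log 2 (1 + m) - log 2 m" using m by (simp add: log_divide)
    have "gapstar_opt N = (m+1) * log 2 ((1 + m) / m) + 2 * log 2 m"
      using False unfolding gapstar_opt_def Nm by (simp add: add.commute)
    also have "\<dots> = log 2 m + m * log 2 ((1 + m) / m) + log 2 (1 + m)"
      unfolding e by (simp add: algebra_simps)
    finally show ?thesis using gap_opt_eq[OF N] unfolding m_def by simp
  qed
  also have "\<dots> \<le> log 2 (real N - 1) + (real N - 1) * log 2 ((1 + \<Delta>) / \<Delta>) + log 2 (1 + \<Delta>)"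
    by (rule f2min[OF N D])
  also have "\<dots> \<le> gapstar \<Delta> N" unfolding gapstar_def by simp
  finally show ?thesis .
qed

lemma theta: "(\<lambda>n. gapstar_opt n) \<in> \<Theta>(\<lambda>n. ln (real n))"
proof -
  have ev: "eventually (\<lambda>n. gapstar_opt n = real n * (ln (real n / (real n - 1)) / ln 2) + 2 * (ln (real n - 1) / ln 2)) at_top"
    using eventually_ge_at_top[of 3] by eventually_elim (auto simp: gapstar_opt_def log_def)
  have "(\<lambda>n. real n * (ln (real n / (real n - 1)) / ln 2) + 2 * (ln (real n - 1) / ln 2)) \<in> \<Theta>(\<lambda>n. ln (real n))"
    by real_asymp
  thus ?thesis using landau_theta.in_cong[OF ev] by simp
qed

theorem mainTheorem7:
  fixes N :: nat
  assumes "N \<ge> 2"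
  shows "(\<forall>\<Delta>>0. \<forall>h g :: nat \<Rightarrow> real.
            (\<forall>i\<in>{1..N}. h i \<ge> 0 \<and> g i \<ge> 0) \<longrightarrow>
            Cbar N h g - RQMF N h g \<Delta> \<le> gapstar \<Delta> N)
       \<and> Delta_opt N > 0
       \<and> (\<forall>\<Delta>>0. gapstar (Delta_opt N) N \<le> gapstar \<Delta> N)
       \<and> gapstar (Delta_opt N) N = gapstar_opt N
       \<and> (\<forall>h g :: nat \<Rightarrow> real.
            (\<forall>i\<in>{1..N}. h i \<ge> 0 \<and> g i \<ge> 0) \<longrightarrow>
            Cbar N h g - RQMF N h g (Delta_opt N) \<le> gapstar_opt N)
       \<and> (\<lambda>n. gapstar_opt n) \<in> \<Theta>(\<lambda>n. ln (real n))"
proof -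
  have pos: "Delta_opt N > 0" using assms unfolding Delta_opt_def by auto
  show ?thesis
    using part1[OF assms] pos gap_min[OF assms] gap_opt_eq[OF assms] theta
      part1[OF assms pos]
    by auto
qed

end
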